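(* Let $I$ be a finite set, $T$ a tree on $I$ with $n$ inner vertices, fix a nice total order on $\mathcal{V}(T)$ with associated edge-labeling $\lambda$, and let $m:\hat{0}=x_0\lhd x_1\lhd\dots\lhd x_n=T$ be the unique maximal chain of $[\hat{0},T]$ with increasing labels. For $i\in[n]$ let $\mathsf{A}_i=\{a \text{ atom}: a\le x_i,\ a\not\le x_{i-1}\}$ and $\mathsf{B}_i=\{a\text{ atom}: \lambda(\hat{0},a)=i\}$. Then $\mathsf{A}_i=\mathsf{B}_i$ for every $i\in[n]$.
   Context: A tree on a finite set $I$ is a (non-planar) rooted binary tree whose leaves are bijectively labeled by $I$: vertices are inner vertices (valence $3$) and leaves and the root (valence $1$), edges oriented towards the root; one-leaf trees are allowed. A forest on $I$ is a set of trees whose leaf sets partition $I$; $\mathcal{V}(F)$ is its set of inner vertices. For forests $F,G$ on $I$, $F \leq G$ if there is a continuous map $F\to G$ which (D1) is increasing with respect to orientation towards the root, (D2) maps inner vertices to inner vertices injectively, (D3) is the identity of $I$ on leaves, (D4) is injective on each tree of $F$. This gives the poset $\operatorname{For}(I)$, graded by number of inner vertices, with minimum $\hat{0}$ (no inner vertices); $[\hat{0},T]$ is a lattice. For $F \leq G \leq T$ inner vertices are regarded as subsets $\mathcal{V}(F)\subseteq\mathcal{V}(G)\subseteq\mathcal{V}(T)$; if $F\lhd G$ there is a unique $v$ with $\mathcal{V}(G)=\mathcal{V}(F)\cup\{v\}$. Partial order on $\mathcal{V}(T)$: $v\preceq v'$ if $v'$ lies on the path between the root and $v$. A nice total order is any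 total order on $\mathcal{V}(T)$ extending $\preceq$; using it the inner vertices are labeled $1,\dots,n$ increasingly and identified with their labels. The edge-labeling is $\lambda(F,G)$ := the unique element of $\mathcal{V}(G)\setminus\mathcal{V}(F)$ for $F\lhd G$ in $[\hat{0},T]$. Atoms are the elements covering $\hat{0}$. *)

theory Defs
  imports Main
begin

text \<open>A (non-planar, leaf-labelled, rooted binary) forest on a finite set I is
  encoded by the set of its vertices, each vertex being identified with the set of leaves
  below it (its cluster). Leaves are the singletons {x}, x in I; inner vertices are the
  clusters with at least two elements; each tree of the forest is a maximal cluster.
  For vertices v, w of a tree, w lies on the path from v to the root iff v is a subset of w.\<close>

definition forest :: "'a set \<Rightarrow> 'a set set \<Rightarrow> bool" where
  "forest I F \<longleftrightarrow>
     (\<forall>A\<in>F. A \<noteq> {} \<and> A \<subseteq> I) \<and>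
     (\<forall>x\<in>I. {x} \<in> F) \<and>
     (\<forall>A\<in>F. \<forall>B\<in>F. A \<subseteq> B \<or> B \<subseteq> A \<or> A \<inter> B = {}) \<and>
     (\<forall>A\<in>F. 2 \<le> card A \<longrightarrow>
        (\<exists>B1\<in>F. \<exists>B2\<in>F. B1 \<noteq> {} \<and> B2 \<noteq> {} \<and> B1 \<inter> B2 = {} \<and> B1 \<union> B2 = A))"

definition is_tree :: "'a set \<Rightarrow> 'a set set \<Rightarrow> bool" where
  "is_tree I T \<longleftrightarrow> forest I T \<and> I \<in> T"

definition inner :: "'a set set \<Rightarrow> 'a set set" where
  "inner F = {A\<in>F. 2 \<le> card A}"

text \<open>Combinatorial data of a map F \<rightarrow> G satisfying (D1)-(D4): phi sends vertices of F to
  vertices of G (each edge then goes to the unique monotone path between the images),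
  (D1) increasing towards the root, (D2) inner vertices to inner vertices injectively,
  (D3) identity on leaves, (D4) injective on each tree: the images of the two children
  of an inner vertex A lie in different branches below phi A, i.e. phi A is the smallest
  vertex of G above both of them.\<close>
definition morph :: "'a set set \<Rightarrow> 'a set set \<Rightarrow> ('a set \<Rightarrow> 'a set) \<Rightarrow> bool" where
  "morph F G \<phi> \<longleftrightarrow>
     (\<forall>A\<in>F. \<phi> A \<in> G) \<and>
     (\<forall>A\<in>F. \<forall>B\<in>F. A \<subseteq> B \<longrightarrow> \<phi> A \<subseteq> \<phi> B) \<and>
     (\<forall>A\<in>inner F. \<phi> A \<in> inner G) \<and> inj_on \<phi> (inner F) \<and>
     (\<forall>A\<in>F. card A = 1 \<longrightarrow> \<phi> A = A) \<and>
     (\<forall>A\<in>F. \<forall>B1\<in>F. \<forall>B2\<in>F.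
        B1 \<noteq> {} \<and> B2 \<noteq> {} \<and> B1 \<inter> B2 = {} \<and> B1 \<union> B2 = A \<longrightarrow>
        (\<forall>C\<in>G. \<phi> B1 \<union> \<phi> B2 \<subseteq> C \<longrightarrow> \<phi> A \<subseteq> C))"

definition leq :: "'a set \<Rightarrow> 'a set set \<Rightarrow> 'a set set \<Rightarrow> bool" where
  "leq I F G \<longleftrightarrow> forest I F \<and> forest I G \<and> (\<exists>\<phi>. morph F G \<phi>)"

definition covers :: "'a set \<Rightarrow> 'a set set \<Rightarrow> 'a set set \<Rightarrow> bool" where
  "covers I F G \<longleftrightarrow> leq I F G \<and> F \<noteq> G \<and>
     \<not> (\<exists>H. leq I F H \<and> leq I H G \<and> H \<noteq> F \<and> H \<noteq> G)"

definition zero :: "'a set \<Rightarrow> 'a set set" where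
  "zero I = {{x} | x. x \<in> I}"

definition atom :: "'a set \<Rightarrow> 'a set set \<Rightarrow> bool" where
  "atom I a \<longleftrightarrow> covers I (zero I) a"

text \<open>For F \<le> T, the inner vertices of F regarded as a subset of the inner vertices of T
  (images under the map F \<rightarrow> T).\<close>
definition vin :: "'a set set \<Rightarrow> 'a set set \<Rightarrow> 'a set set" where
  "vin T F = (SOME V. \<exists>\<phi>. morph F T \<phi> \<and> V = \<phi> ` inner F)"

text \<open>Nice total order on the inner vertices of T, given as the increasing labelling
  by 1..n: it extends the order v \<preceq> v' (v' on the path from the root to v).\<close>
definition nice_order :: "'a set set \<Rightarrow> ('a set \<Rightarrow> nat) \<Rightarrow> bool" where
  "nice_order T lbl \<longleftrightarrow> bij_betw lbl (inner T) {1..card (inner T)} \<and>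
     (\<forall>v\<in>inner T. \<forall>w\<in>inner T. v \<subseteq> w \<longrightarrow> lbl v \<le> lbl w)"

definition lam :: "'a set set \<Rightarrow> ('a set \<Rightarrow> nat) \<Rightarrow> 'a set set \<Rightarrow> 'a set set \<Rightarrow> nat" where
  "lam T lbl F G = lbl (THE v. vin T G - vin T F = {v})"

end

theory Submission
  imports Defs
begin

lemma forest_sub: "forest I F \<Longrightarrow> A \<in> F \<Longrightarrow> A \<subseteq> I \<and> A \<noteq> {}"
  unfolding forest_def by (drule conjunct1) (drule bspec, assumption, blast)
lemma forest_single: "forest I F \<Longrightarrow> x \<in> I \<Longrightarrow> {x} \<in> F"
  unfolding forest_def by (drule conjunct2, drule conjunct1) (erule bspec)
lemma forest_lam: "forest I F \<Longrightarrow> A \<in> F \<Longrightarrow> B \<in> F \<Longrightarrow> A \<subseteq> B \<or> B \<subseteq> A \<or> A \<inter> B = {}"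
  unfolding forest_def by (drule conjunct2, drule conjunct2, drule conjunct1) blast
lemma forest_split: "forest I F \<Longrightarrow> A \<in> F \<Longrightarrow> 2 \<le> card A \<Longrightarrow>
   \<exists>B1\<in>F. \<exists>B2\<in>F. B1 \<noteq> {} \<and> B2 \<noteq> {} \<and> B1 \<inter> B2 = {} \<and> B1 \<union> B2 = A"
  unfolding forest_def by (drule conjunct2, drule conjunct2, drule conjunct2) blast
lemma forest_fin: "finite I \<Longrightarrow> forest I F \<Longrightarrow> A \<in> F \<Longrightarrow> finite A"
  by (meson finite_subset forest_sub)
lemma forest_card1: "finite I \<Longrightarrow> forest I F \<Longrightarrow> A \<in> F \<Longrightarrow> \<not> 2 \<le> card A \<Longrightarrow> \<exists>x\<in>I. A = {x}"
proof -
  assume a: "finite I" "forest I F" "A \<in> F" "\<not> 2 \<le> card A"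
  have "finite A" "A \<noteq> {}" "A \<subseteq> I" using forest_fin[OF a(1-3)] forest_sub[OF a(2,3)] by auto
  then have "card A \<noteq> 0" by simp
  then have "card A = 1" using a(4) by linarith
  then obtain y where "A = {y}" using card_1_singletonE by blast
  then show ?thesis using \<open>A \<subseteq> I\<close> by blast
qed
lemma finite_forest: "finite I \<Longrightarrow> forest I F \<Longrightarrow> finite F"
proof -
  assume a: "finite I" "forest I F"
  have "F \<subseteq> Pow I" using forest_sub[OF a(2)] by blast
  then show ?thesis using a(1) finite_subset by blast
qed
lemma finite_inner: "finite I \<Longrightarrow> forest I F \<Longrightarrow> finite (inner F)"
proof -
  assume a: "finite I" "forest I F"
  have "inner F \<subseteq> F" unfolding inner_def by blast
  then show ?thesis using finite_forest[OF a] finite_subset by blast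
qed
lemma split_card: "finite I \<Longrightarrow> forest I F \<Longrightarrow> B1 \<in> F \<Longrightarrow> B2 \<in> F \<Longrightarrow> B1 \<noteq> {} \<Longrightarrow> B2 \<noteq> {}
   \<Longrightarrow> B1 \<inter> B2 = {} \<Longrightarrow> card B1 < card (B1 \<union> B2) \<and> card B2 < card (B1 \<union> B2) \<and> 2 \<le> card (B1 \<union> B2)"
proof -
  assume a: "finite I" "forest I F" "B1 \<in> F" "B2 \<in> F" "B1 \<noteq> {}" "B2 \<noteq> {}" "B1 \<inter> B2 = {}"
  have f: "finite B1" "finite B2" using a forest_fin by metis+
  have c: "card (B1 \<union> B2) = card B1 + card B2" using f a(7) card_Un_disjoint by blast
  have "card B1 > 0" "card B2 > 0" using f a(5,6) by auto
  then show ?thesis using c by linarith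
qed

lemma morphD_all: "morph F G \<phi> \<Longrightarrow> (\<forall>A\<in>F. \<phi> A \<in> G) \<and> (\<forall>A\<in>F. \<forall>B\<in>F. A \<subseteq> B \<longrightarrow> \<phi> A \<subseteq> \<phi> B) \<and>
     (\<forall>A\<in>inner F. \<phi> A \<in> inner G) \<and> inj_on \<phi> (inner F) \<and>
     (\<forall>A\<in>F. card A = 1 \<longrightarrow> \<phi> A = A) \<and>
     (\<forall>A\<in>F. \<forall>B1\<in>F. \<forall>B2\<in>F.
        B1 \<noteq> {} \<and> B2 \<noteq> {} \<and> B1 \<inter> B2 = {} \<and> B1 \<union> B2 = A \<longrightarrow>
        (\<forall>C\<in>G. \<phi> B1 \<union> \<phi> B2 \<subseteq> C \<longrightarrow> \<phi> A \<subseteq> C))"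
  unfolding morph_def by assumption
lemmas morphD = morphD_all[THEN conjunct1] morphD_all[THEN conjunct2, THEN conjunct1]
  morphD_all[THEN conjunct2, THEN conjunct2, THEN conjunct1]
  morphD_all[THEN conjunct2, THEN conjunct2, THEN conjunct2, THEN conjunct1]
  morphD_all[THEN conjunct2, THEN conjunct2, THEN conjunct2, THEN conjunct2, THEN conjunct1]
  morphD_all[THEN conjunct2, THEN conjunct2, THEN conjunct2, THEN conjunct2, THEN conjunct2]
lemma morph_in: "morph F G \<phi> \<Longrightarrow> A \<in> F \<Longrightarrow> \<phi> A \<in> G"
  using morphD(1) by blast
lemma morph_mono: "morph F G \<phi> \<Longrightarrow> A \<in> F \<Longrightarrow> B \<in> F \<Longrightarrow> A \<subseteq> B \<Longrightarrow> \<phi> A \<subseteq> \<phi> B"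
  using morphD(2) by blast
lemma morph_inner: "morph F G \<phi> \<Longrightarrow> A \<in> inner F \<Longrightarrow> \<phi> A \<in> inner G"
  using morphD(3) by blast
lemma morph_inj: "morph F G \<phi> \<Longrightarrow> inj_on \<phi> (inner F)"
  using morphD(4) by blast
lemma morph_leaf: "morph F G \<phi> \<Longrightarrow> A \<in> F \<Longrightarrow> card A = 1 \<Longrightarrow> \<phi> A = A"
  using morphD(5) by blast
lemma morph_lca: "morph F G \<phi> \<Longrightarrow> A \<in> F \<Longrightarrow> B1 \<in> F \<Longrightarrow> B2 \<in> F \<Longrightarrow> B1 \<noteq> {} \<Longrightarrow> B2 \<noteq> {} \<Longrightarrow>
   B1 \<inter> B2 = {} \<Longrightarrow> B1 \<union> B2 = A \<Longrightarrow> C \<in> G \<Longrightarrow> \<phi> B1 \<union> \<phi> B2 \<subseteq> C \<Longrightarrow> \<phi> A \<subseteq> C"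
proof -
  assume m: "morph F G \<phi>" and r: "A \<in> F" "B1 \<in> F" "B2 \<in> F" "B1 \<noteq> {}" "B2 \<noteq> {}"
   "B1 \<inter> B2 = {}" "B1 \<union> B2 = A" "C \<in> G" "\<phi> B1 \<union> \<phi> B2 \<subseteq> C"
  have "\<forall>C\<in>G. \<phi> B1 \<union> \<phi> B2 \<subseteq> C \<longrightarrow> \<phi> A \<subseteq> C" using morphD(6)[OF m] r(1-7) by blast
  then show ?thesis using r(8,9) by blast
qed

lemma morph_sup: "forest I F \<Longrightarrow> morph F G \<phi> \<Longrightarrow> A \<in> F \<Longrightarrow> A \<subseteq> \<phi> A"
proof
  fix y assume a: "forest I F" "morph F G \<phi>" "A \<in> F" "y \<in> A"
  have "y \<in> I" using forest_sub[OF a(1,3)] a(4) by blast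
  then have yF: "{y} \<in> F" by (rule forest_single[OF a(1)])
  then have "\<phi> {y} = {y}" using morph_leaf[OF a(2) yF] by simp
  moreover have "\<phi> {y} \<subseteq> \<phi> A" using morph_mono[OF a(2) yF a(3)] a(4) by simp
  ultimately show "y \<in> \<phi> A" by blast
qed

lemma morph_least: "finite I \<Longrightarrow> forest I F \<Longrightarrow> morph F G \<phi> \<Longrightarrow> A \<in> F \<Longrightarrow> C \<in> G \<Longrightarrow> A \<subseteq> C \<Longrightarrow> \<phi> A \<subseteq> C"
proof (induction "card A" arbitrary: A rule: less_induct)
  case less
  show ?case
  proof (cases "2 \<le> card A")
    case True
    then obtain B1 B2 where b: "B1\<in>F" "B2\<in>F" "B1 \<noteq> {}" "B2 \<noteq> {}" "B1 \<inter> B2 = {}" "B1 \<union> B2 = A"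
      using forest_split[OF less.prems(2,4)] by blast
    have "card B1 < card A" "card B2 < card A" using split_card[OF less.prems(1,2) b(1-5)] b(6) by auto
    moreover have "B1 \<subseteq> C" "B2 \<subseteq> C" using b(6) less.prems(6) by auto
    ultimately have "\<phi> B1 \<subseteq> C" "\<phi> B2 \<subseteq> C" using less.hyps less.prems(1-3,5) b(1,2) by auto
    then show ?thesis using morph_lca[OF less.prems(3,4) b less.prems(5)] by blast
  next
    case False
    then obtain y where "A = {y}" using forest_card1[OF less.prems(1,2,4)] by blast
    then have "\<phi> A = A" using morph_leaf[OF less.prems(3,4)] by simp
    then show ?thesis using less.prems(6) by simp
  qed
qed

lemma morph_uniq: "finite I \<Longrightarrow> forest I F \<Longrightarrow> morph F G \<phi> \<Longrightarrow> morph F G \<psi> \<Longrightarrow> A \<in> F \<Longrightarrow> \<phi> A = \<psi> A"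
proof -
  assume a: "finite I" "forest I F" "morph F G \<phi>" "morph F G \<psi>" "A \<in> F"
  have 1: "\<phi> A \<subseteq> \<psi> A" using morph_least[OF a(1,2,3,5) morph_in[OF a(4,5)] morph_sup[OF a(2,4,5)]] .
  have 2: "\<psi> A \<subseteq> \<phi> A" using morph_least[OF a(1,2,4,5) morph_in[OF a(3,5)] morph_sup[OF a(2,3,5)]] .
  show ?thesis using 1 2 by blast
qed

lemma morph_id: "F \<subseteq> G \<Longrightarrow> morph F G id"
  unfolding morph_def inner_def by auto

lemma inner_iff: "A \<in> inner F \<longleftrightarrow> A \<in> F \<and> 2 \<le> card A"
  unfolding inner_def by simp

lemma morph_disj_aux:
  assumes I: "finite I" and fG: "forest I G" and m: "morph G T \<phi>"
    and e: "E \<in> G" "E1 \<in> G" "E2 \<in> G" "E1 \<noteq> {}" "E2 \<noteq> {}" "E1 \<inter> E2 = {}" "E1 \<union> E2 = E"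
    and sub: "\<phi> E1 \<subseteq> \<phi> E2"
  shows False
proof -
  have T2: "\<phi> E2 \<in> T" using morph_in[OF m e(3)] .
  have "\<phi> E1 \<union> \<phi> E2 \<subseteq> \<phi> E2" using sub by blast
  then have "\<phi> E \<subseteq> \<phi> E2" by (rule morph_lca[OF m e(1-7) T2])
  moreover have "\<phi> E2 \<subseteq> \<phi> E" using morph_mono[OF m e(3) e(1)] e(7) by blast
  ultimately have eq: "\<phi> E = \<phi> E2" by blast
  have cE: "2 \<le> card E" using split_card[OF I fG e(2-6)] e(7) by simp
  show False
  proof (cases "2 \<le> card E2")
    case True
    have "E2 \<in> inner G" "E \<in> inner G" using True cE e(1,3) inner_iff by blast+
    then have "E = E2" using inj_onD[OF morph_inj[OF m] eq] by blast
    then show False using e(4-7) by blast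
  next
    case False
    obtain y where "E2 = {y}" using forest_card1[OF I fG e(3) False] by blast
    then have "\<phi> E2 = E2" using morph_leaf[OF m e(3)] by auto
    then have "E \<subseteq> E2" using eq morph_sup[OF fG m e(1)] by simp
    then show False using e(4-7) by blast
  qed
qed

lemma morph_disj:
  assumes I: "finite I" and fG: "forest I G" and fT: "forest I T" and m: "morph G T \<phi>"
    and e: "E \<in> G" "E1 \<in> G" "E2 \<in> G" "E1 \<noteq> {}" "E2 \<noteq> {}" "E1 \<inter> E2 = {}" "E1 \<union> E2 = E"
  shows "\<phi> E1 \<inter> \<phi> E2 = {}"
proof -
  have t: "\<phi> E1 \<in> T" "\<phi> E2 \<in> T" using morph_in[OF m e(2)] morph_in[OF m e(3)] by auto
  have "\<phi> E1 \<subseteq> \<phi> E2 \<or> \<phi> E2 \<subseteq> \<phi> E1 \<or> \<phi> E1 \<inter> \<phi> E2 = {}" using forest_lam[OF fT t] .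
  moreover have "\<not> \<phi> E1 \<subseteq> \<phi> E2" using morph_disj_aux[OF I fG m e] by blast
  moreover have e': "E2 \<inter> E1 = {}" "E2 \<union> E1 = E" using e(6,7) by blast+
  then have "\<not> \<phi> E2 \<subseteq> \<phi> E1"
    using morph_disj_aux[OF I fG m e(1,3,2,5,4) e'] by blast
  ultimately show ?thesis by auto
qed

lemma morph_meet:
  assumes I: "finite I" and fG: "forest I G" and fT: "forest I T" and m: "morph G T \<phi>"
    and e: "E \<in> G" "E1 \<in> G" "E2 \<in> G" "E1 \<noteq> {}" "E2 \<noteq> {}" "E1 \<inter> E2 = {}" "E1 \<union> E2 = E"
    and K: "K \<in> T" "K \<inter> E1 \<noteq> {}" "K \<inter> E2 \<noteq> {}"
  shows "\<phi> E \<subseteq> K"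
proof -
  have d: "\<phi> E1 \<inter> \<phi> E2 = {}" by (rule morph_disj[OF I fG fT m e])
  have s1: "E1 \<subseteq> \<phi> E1" "E2 \<subseteq> \<phi> E2" using morph_sup[OF fG m e(2)] morph_sup[OF fG m e(3)] by auto
  have T1: "\<phi> E1 \<in> T" "\<phi> E2 \<in> T" using morph_in[OF m e(2)] morph_in[OF m e(3)] by auto
  have "K \<subseteq> \<phi> E1 \<or> \<phi> E1 \<subseteq> K \<or> K \<inter> \<phi> E1 = {}" using forest_lam[OF fT K(1) T1(1)] .
  then have k1: "\<phi> E1 \<subseteq> K" using d s1 K(2,3) by blast
  have "K \<subseteq> \<phi> E2 \<or> \<phi> E2 \<subseteq> K \<or> K \<inter> \<phi> E2 = {}" using forest_lam[OF fT K(1) T1(2)] .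
  then have k2: "\<phi> E2 \<subseteq> K" using d s1 K(2,3) by blast
  show ?thesis using morph_lca[OF m e K(1)] k1 k2 by blast
qed

lemma morph_comp:
  assumes I: "finite I" and fF: "forest I F" and fG: "forest I G" and fT: "forest I T"
    and m1: "morph F G \<phi>1" and m2: "morph G T \<phi>2"
  shows "morph F T (\<phi>2 \<circ> \<phi>1)"
  unfolding morph_def
proof (intro conjI ballI impI allI)
  fix A assume a: "A \<in> F"
  have "\<phi>2 (\<phi>1 A) \<in> T" by (rule morph_in[OF m2 morph_in[OF m1 a]])
  then show "(\<phi>2 \<circ> \<phi>1) A \<in> T" by simp
next
  fix A B assume a: "A \<in> F" "B \<in> F" "A \<subseteq> B"
  have "\<phi>2 (\<phi>1 A) \<subseteq> \<phi>2 (\<phi>1 B)"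
    by (rule morph_mono[OF m2 morph_in[OF m1 a(1)] morph_in[OF m1 a(2)] morph_mono[OF m1 a]])
  then show "(\<phi>2 \<circ> \<phi>1) A \<subseteq> (\<phi>2 \<circ> \<phi>1) B" by simp
next
  fix A assume a: "A \<in> inner F"
  have "\<phi>2 (\<phi>1 A) \<in> inner T" by (rule morph_inner[OF m2 morph_inner[OF m1 a]])
  then show "(\<phi>2 \<circ> \<phi>1) A \<in> inner T" by simp
next
  have "\<phi>1 ` inner F \<subseteq> inner G" using morph_inner[OF m1] by blast
  then have "inj_on \<phi>2 (\<phi>1 ` inner F)" using morph_inj[OF m2] inj_on_subset by blast
  then show "inj_on (\<phi>2 \<circ> \<phi>1) (inner F)" using comp_inj_on morph_inj[OF m1] by blast
next
  fix A assume a: "A \<in> F" "card A = 1"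
  then have e: "\<phi>1 A = A" using morph_leaf[OF m1 a] by blast
  then have "A \<in> G" using morph_in[OF m1 a(1)] by simp
  then have "\<phi>2 A = A" using morph_leaf[OF m2 _ a(2)] by blast
  then show "(\<phi>2 \<circ> \<phi>1) A = A" using e by simp
next
  fix A B1 B2 C
  assume a: "A \<in> F" "B1 \<in> F" "B2 \<in> F" and b: "B1 \<noteq> {} \<and> B2 \<noteq> {} \<and> B1 \<inter> B2 = {} \<and> B1 \<union> B2 = A"
    and c: "C \<in> T" "(\<phi>2 \<circ> \<phi>1) B1 \<union> (\<phi>2 \<circ> \<phi>1) B2 \<subseteq> C"
  define E where "E = \<phi>1 A"
  have cA: "2 \<le> card A" using split_card[OF I fF a(2,3)] b by metis
  then have "A \<in> inner F" using a(1) inner_iff by blast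
  then have "E \<in> inner G" unfolding E_def by (rule morph_inner[OF m1])
  then have EG: "E \<in> G" "2 \<le> card E" using inner_iff by auto
  then obtain E1 E2 where e: "E1\<in>G" "E2\<in>G" "E1 \<noteq> {}" "E2 \<noteq> {}" "E1 \<inter> E2 = {}" "E1 \<union> E2 = E"
    using forest_split[OF fG EG] by blast
  have AE: "A \<subseteq> E" unfolding E_def by (rule morph_sup[OF fF m1 a(1)])
  have "\<not> A \<subseteq> E2"
  proof
    assume "A \<subseteq> E2"
    then have "E \<subseteq> E2" unfolding E_def using morph_least[OF I fF m1 a(1) e(2)] by blast
    then show False using e(3-6) by blast
  qed
  then have AE1: "A \<inter> E1 \<noteq> {}" using AE e(6) by blast
  have "\<not> A \<subseteq> E1"
  proof
    assume "A \<subseteq> E1"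
    then have "E \<subseteq> E1" unfolding E_def using morph_least[OF I fF m1 a(1) e(1)] by blast
    then show False using e(3-6) by blast
  qed
  then have AE2: "A \<inter> E2 \<noteq> {}" using AE e(6) by blast
  have "B1 \<subseteq> \<phi>1 B1" "B2 \<subseteq> \<phi>1 B2" using morph_sup[OF fF m1 a(2)] morph_sup[OF fF m1 a(3)] by auto
  moreover have "\<phi>1 B1 \<subseteq> \<phi>2 (\<phi>1 B1)" "\<phi>1 B2 \<subseteq> \<phi>2 (\<phi>1 B2)"
    using morph_sup[OF fG m2 morph_in[OF m1 a(2)]] morph_sup[OF fG m2 morph_in[OF m1 a(3)]] by auto
  ultimately have "A \<subseteq> C" using c(2) b by auto
  then have "C \<inter> E1 \<noteq> {}" "C \<inter> E2 \<noteq> {}" using AE1 AE2 by blast+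
  then have "\<phi>2 E \<subseteq> C" using morph_meet[OF I fG fT m2 EG(1) e c(1)] by blast
  then show "(\<phi>2 \<circ> \<phi>1) A \<subseteq> C" unfolding E_def by simp
qed

lemma leq_trans: "finite I \<Longrightarrow> leq I F G \<Longrightarrow> leq I G T \<Longrightarrow> leq I F T"
proof -
  assume a: "finite I" "leq I F G" "leq I G T"
  obtain \<phi>1 \<phi>2 where f: "forest I F" "forest I G" "forest I T" "morph F G \<phi>1" "morph G T \<phi>2"
    using a(2,3) unfolding leq_def by blast
  show ?thesis unfolding leq_def using f(1,3) morph_comp[OF a(1) f] by blast
qed

lemma vin_eq:
  assumes I: "finite I" and fF: "forest I F" and m: "morph F T \<phi>"
  shows "vin T F = \<phi> ` inner F"
proof -
  have "\<exists>V. \<exists>\<psi>. morph F T \<psi> \<and> V = \<psi> ` inner F" using m by blast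
  then have "\<exists>\<psi>. morph F T \<psi> \<and> vin T F = \<psi> ` inner F" unfolding vin_def by (rule someI_ex)
  then obtain \<psi> where p: "morph F T \<psi>" "vin T F = \<psi> ` inner F" by blast
  have "\<psi> ` inner F = \<phi> ` inner F"
  proof (rule image_cong[OF refl])
    fix A assume "A \<in> inner F"
    then have "A \<in> F" unfolding inner_def by blast
    then show "\<psi> A = \<phi> A" by (rule morph_uniq[OF I fF p(1) m])
  qed
  then show ?thesis using p(2) by simp
qed

definition cnt :: "'a set set \<Rightarrow> 'a set \<Rightarrow> nat" where
  "cnt F S = card {A \<in> inner F. A \<subseteq> S}"

lemma inner_nonempty: "forest I F \<Longrightarrow> A \<in> inner F \<Longrightarrow> A \<noteq> {}"
  using forest_sub inner_iff by blast

lemma child_sub: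
  assumes fF: "forest I F" and c: "B1 \<in> F" "B2 \<in> F" "B1 \<inter> B2 = {}" "B1 \<union> B2 = C"
    and d: "D \<in> F" "D \<subseteq> C" "D \<noteq> C"
  shows "D \<subseteq> B1 \<or> D \<subseteq> B2"
proof -
  have l1: "D \<subseteq> B1 \<or> B1 \<subseteq> D \<or> D \<inter> B1 = {}" by (rule forest_lam[OF fF d(1) c(1)])
  have l2: "D \<subseteq> B2 \<or> B2 \<subseteq> D \<or> D \<inter> B2 = {}" by (rule forest_lam[OF fF d(1) c(2)])
  show ?thesis using l1 l2 c(3,4) d(2,3) by blast
qed

lemma cnt_dec:
  assumes I: "finite I" and fF: "forest I F" and c: "C \<in> F" "B1 \<in> F" "B2 \<in> F" "B1 \<noteq> {}" "B2 \<noteq> {}"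
    "B1 \<inter> B2 = {}" "B1 \<union> B2 = C"
  shows "cnt F C = Suc (cnt F B1 + cnt F B2)"
proof -
  let ?M = "{A \<in> inner F. A \<subseteq> C}"
  let ?M1 = "{A \<in> inner F. A \<subseteq> B1}"
  let ?M2 = "{A \<in> inner F. A \<subseteq> B2}"
  have cC: "2 \<le> card C" using split_card[OF I fF c(2-6)] c(7) by simp
  have eq: "?M = insert C (?M1 \<union> ?M2)"
  proof (intro equalityI subsetI)
    fix D assume "D \<in> ?M"
    then have D: "D \<in> inner F" "D \<subseteq> C" by auto
    then have DF: "D \<in> F" using inner_iff by blast
    show "D \<in> insert C (?M1 \<union> ?M2)"
    proof (cases "D = C")
      case False
      then have "D \<subseteq> B1 \<or> D \<subseteq> B2" using child_sub[OF fF c(2,3,6,7) DF D(2)] by blast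
      then show ?thesis using D(1) by blast
    qed simp
  next
    fix D assume "D \<in> insert C (?M1 \<union> ?M2)"
    then show "D \<in> ?M" using c(1,7) cC inner_iff by blast
  qed
  have fin: "finite ?M1" "finite ?M2" using finite_inner[OF I fF] by auto
  have notin: "C \<notin> ?M1 \<union> ?M2" using c(4-7) by blast
  have disj: "?M1 \<inter> ?M2 = {}" using inner_nonempty[OF fF] c(6) by blast
  have "card ?M = Suc (card (?M1 \<union> ?M2))" unfolding eq using fin notin by simp
  also have "\<dots> = Suc (card ?M1 + card ?M2)" using card_Un_disjoint[OF fin disj] by simp
  finally show ?thesis unfolding cnt_def .
qed

lemma cnt_tree: "finite I \<Longrightarrow> forest I F \<Longrightarrow> C \<in> F \<Longrightarrow> cnt F C + 1 = card C"
proof (induction "card C" arbitrary: C rule: less_induct)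
  case less
  note I = less.prems(1) and fF = less.prems(2) and cF = less.prems(3)
  show ?case
  proof (cases "2 \<le> card C")
    case True
    then obtain B1 B2 where b: "B1\<in>F" "B2\<in>F" "B1 \<noteq> {}" "B2 \<noteq> {}" "B1 \<inter> B2 = {}" "B1 \<union> B2 = C"
      using forest_split[OF fF cF] by blast
    have lt: "card B1 < card C" "card B2 < card C" using split_card[OF I fF b(1-5)] b(6) by auto
    have h1: "cnt F B1 + 1 = card B1" using less.hyps[OF lt(1) I fF b(1)] .
    have h2: "cnt F B2 + 1 = card B2" using less.hyps[OF lt(2) I fF b(2)] .
    have "card C = card B1 + card B2" using b(5,6) card_Un_disjoint forest_fin[OF I fF b(1)] forest_fin[OF I fF b(2)] by blast
    then show ?thesis using cnt_dec[OF I fF cF b] h1 h2 by simp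
  next
    case False
    then obtain y where y: "C = {y}" using forest_card1[OF I fF cF] by blast
    have "{A \<in> inner F. A \<subseteq> C} = {}"
    proof (rule ccontr)
      assume "{A \<in> inner F. A \<subseteq> C} \<noteq> {}"
      then obtain A where "A \<in> inner F" "A \<subseteq> {y}" using y by blast
      then have "2 \<le> card A" "card A \<le> card {y}" using card_mono[of "{y}" A] by (auto simp: inner_iff)
      then show False by simp
    qed
    then show ?thesis unfolding cnt_def using y by simp
  qed
qed

lemma forest_decomp: "finite I \<Longrightarrow> forest I F \<Longrightarrow> F = zero I \<union> inner F"
proof (intro equalityI subsetI)
  fix A assume a: "finite I" "forest I F" "A \<in> F"
  show "A \<in> zero I \<union> inner F"
  proof (cases "2 \<le> card A")
    case True then show ?thesis using a(3) inner_iff by blast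
  next
    case False
    then obtain y where "y \<in> I" "A = {y}" using forest_card1[OF a False] by blast
    then show ?thesis unfolding zero_def by blast
  qed
next
  fix A assume a: "finite I" "forest I F" "A \<in> zero I \<union> inner F"
  then show "A \<in> F" unfolding zero_def using forest_single[OF a(2)] inner_iff by blast
qed

lemma cnt_bound: "finite I \<Longrightarrow> forest I F \<Longrightarrow> S \<subseteq> I \<Longrightarrow> S \<noteq> {} \<Longrightarrow>
   cnt F S + 1 \<le> card S \<and> (S \<notin> F \<longrightarrow> cnt F S + 2 \<le> card S)"
proof (induction "card S" arbitrary: S rule: less_induct)
  case less
  note I = less.prems(1) and fF = less.prems(2) and SI = less.prems(3) and Sne = less.prems(4)
  let ?M = "{A \<in> inner F. A \<subseteq> S}"
  have finM: "finite ?M" using finite_inner[OF I fF] by auto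
  have finS: "finite S" using SI I finite_subset by blast
  have cS: "card S \<ge> 1" using finS Sne by (simp add: Suc_le_eq card_gt_0_iff)
  show ?case
  proof (cases "?M = {}")
    case True
    have c0: "cnt F S = 0" unfolding cnt_def using True by (simp only: card.empty)
    have "S \<notin> F \<longrightarrow> 2 \<le> card S"
    proof
      assume nF: "S \<notin> F"
      have "card S \<noteq> 1"
      proof
        assume "card S = 1"
        then obtain y where "S = {y}" using card_1_singletonE by blast
        then show False using nF forest_single[OF fF] SI by blast
      qed
      then show "2 \<le> card S" using cS by linarith
    qed
    then show ?thesis using c0 cS by (simp add: numeral_2_eq_2)
  next
    case False
    define k where "k = Max (card ` ?M)"
    have "k \<in> card ` ?M" unfolding k_def using finM False by simp
    then obtain A where A: "A \<in> ?M" "card A = k" by blast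
    have maxA: "\<And>A'. A' \<in> ?M \<Longrightarrow> card A' \<le> card A" unfolding A(2) k_def using finM by simp
    have AF: "A \<in> F" "A \<subseteq> S" "2 \<le> card A" using A(1) inner_iff by auto
    have finA: "finite A" using forest_fin[OF I fF AF(1)] .
    show ?thesis
    proof (cases "A = S")
      case True
      then have "cnt F S + 1 = card S" using cnt_tree[OF I fF] AF(1) by blast
      then show ?thesis using True AF(1) by simp
    next
      case False
      let ?M1 = "{A' \<in> inner F. A' \<subseteq> A}"
      let ?M2 = "{A' \<in> inner F. A' \<subseteq> S - A}"
      have eq: "?M = ?M1 \<union> ?M2"
      proof (intro equalityI subsetI)
        fix A' assume a': "A' \<in> ?M"
        then have A'F: "A' \<in> F" "A' \<subseteq> S" using inner_iff by auto
        have "A' \<subseteq> A \<or> A \<subseteq> A' \<or> A' \<inter> A = {}" by (rule forest_lam[OF fF A'F(1) AF(1)])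
        moreover have "A \<subseteq> A' \<Longrightarrow> A' = A"
        proof -
          assume s: "A \<subseteq> A'"
          have "finite A'" using forest_fin[OF I fF A'F(1)] .
          moreover have "card A' \<le> card A" using maxA[OF a'] .
          ultimately show "A' = A" using card_subset_eq[of A' A] s card_mono[of A' A] by (metis le_antisym)
        qed
        ultimately show "A' \<in> ?M1 \<union> ?M2" using a' A'F(2) by blast
      next
        fix A' assume "A' \<in> ?M1 \<union> ?M2"
        then show "A' \<in> ?M" using AF(2) by blast
      qed
      have fin: "finite ?M1" "finite ?M2" using finite_inner[OF I fF] by auto
      have disj: "?M1 \<inter> ?M2 = {}" using inner_nonempty[OF fF] by blast
      have c1: "cnt F S = cnt F A + cnt F (S - A)" unfolding cnt_def eq using card_Un_disjoint[OF fin disj] .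
      have c2: "cnt F A + 1 = card A" using cnt_tree[OF I fF AF(1)] .
      have ne: "S - A \<noteq> {}" using False AF(2) by blast
      have cSA: "card S = card A + card (S - A)" using AF(2) finS card_Diff_subset[OF finA AF(2)] card_mono[OF finS AF(2)] by simp
      have lt: "card (S - A) < card S" using cSA AF(3) by simp
      have "cnt F (S - A) + 1 \<le> card (S - A)" using less.hyps[OF lt I fF _ ne] SI by blast
      then show ?thesis using c1 c2 cSA by simp
    qed
  qed
qed

lemma t1:
  assumes m: "morph F G \<phi>"
    and all: "\<forall>D'\<in>inner G. D' \<subseteq> D \<longrightarrow> D' \<in> \<phi> ` inner F"
  shows "\<phi> ` {A \<in> inner F. \<phi> A \<subseteq> D} = {D' \<in> inner G. D' \<subseteq> D}"
  proof (intro equalityI subsetI)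
    fix D' assume "D' \<in> \<phi> ` {A \<in> inner F. \<phi> A \<subseteq> D}"
    then obtain A where A0: "A \<in> {A \<in> inner F. \<phi> A \<subseteq> D}" "D' = \<phi> A" by (rule imageE)
    then have A: "A \<in> inner F" "\<phi> A \<subseteq> D" "D' = \<phi> A" by simp_all
    have "\<phi> A \<in> inner G" using morph_inner[OF m A(1)] .
    then show "D' \<in> {D' \<in> inner G. D' \<subseteq> D}" using A by simp
  next
    fix D' assume d': "D' \<in> {D' \<in> inner G. D' \<subseteq> D}"
    then have d'': "D' \<in> inner G" "D' \<subseteq> D" by simp_all
    have "D' \<in> \<phi> ` inner F" by (rule all[rule_format, OF d''])
    then obtain A where A: "A \<in> inner F" "D' = \<phi> A" by (rule imageE)
    then have "A \<in> {A \<in> inner F. \<phi> A \<subseteq> D}" using d'' by simp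
    then show "D' \<in> \<phi> ` {A \<in> inner F. \<phi> A \<subseteq> D}" using A(2) by (rule rev_image_eqI)
  qed

lemma morph_fill:
  assumes I: "finite I" and fF: "forest I F" and fG: "forest I G" and m: "morph F G \<phi>"
    and D: "D \<in> inner G" and all: "\<forall>D'\<in>inner G. D' \<subseteq> D \<longrightarrow> D' \<in> \<phi> ` inner F"
  shows "D \<in> F"
proof (rule ccontr)
  assume nD: "D \<notin> F"
  let ?S = "{A \<in> inner F. \<phi> A \<subseteq> D}"
  have DG: "D \<in> G" using D inner_iff by blast
  have im: "\<phi> ` ?S = {D' \<in> inner G. D' \<subseteq> D}" by (rule t1[OF m all])
  have inj: "inj_on \<phi> ?S" by (rule inj_on_subset[OF morph_inj[OF m]]) blast
  have "card ?S = cnt G D" unfolding cnt_def using card_image[OF inj] im by simp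
  then have c1: "card ?S + 1 = card D" using cnt_tree[OF I fG DG] by simp
  have sub: "?S \<subseteq> {A \<in> inner F. A \<subseteq> D}"
  proof
    fix A assume a: "A \<in> ?S"
    then have "A \<in> F" using inner_iff by blast
    then have "A \<subseteq> \<phi> A" using morph_sup[OF fF m] by blast
    then show "A \<in> {A \<in> inner F. A \<subseteq> D}" using a by blast
  qed
  have "card ?S \<le> cnt F D" unfolding cnt_def
    by (rule card_mono[OF _ sub]) (use finite_inner[OF I fF] in auto)
  moreover have "cnt F D + 2 \<le> card D"
  proof -
    have DI: "D \<subseteq> I" "D \<noteq> {}" using forest_sub[OF fG DG] by auto
    show ?thesis using cnt_bound[OF I fF DI] nD by blast
  qed
  ultimately show False using c1 by simp
qed

lemma leq_strict:
  assumes I: "finite I" and l: "leq I F G" and ne: "F \<noteq> G"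
  shows "card (inner F) < card (inner G)"
proof -
  obtain \<phi> where f: "forest I F" "forest I G" and m: "morph F G \<phi>" using l unfolding leq_def by blast
  have finG: "finite (inner G)" using finite_inner[OF I f(2)] .
  have finF: "finite (inner F)" using finite_inner[OF I f(1)] .
  have sub: "\<phi> ` inner F \<subseteq> inner G" using morph_inner[OF m] by blast
  have cim: "card (\<phi> ` inner F) = card (inner F)" using card_image[OF morph_inj[OF m]] .
  have le: "card (inner F) \<le> card (inner G)" using card_mono[OF finG sub] cim by simp
  have "card (inner F) \<noteq> card (inner G)"
  proof
    assume eqc: "card (inner F) = card (inner G)"
    then have imeq: "\<phi> ` inner F = inner G" using card_subset_eq[OF finG sub] cim by simp
    have "inner G \<subseteq> inner F"
    proof
      fix D assume D: "D \<in> inner G"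
      have "D \<in> F" by (rule morph_fill[OF I f m D]) (use imeq in blast)
      then show "D \<in> inner F" using D inner_iff by blast
    qed
    then have "inner G = inner F" using card_subset_eq[OF finF] eqc by simp
    then have "F = G" using forest_decomp[OF I f(1)] forest_decomp[OF I f(2)] by simp
    then show False using ne by simp
  qed
  then show ?thesis using le by simp
qed

definition cherry :: "'a set \<Rightarrow> 'a \<Rightarrow> 'a \<Rightarrow> 'a set set" where
  "cherry I u v = insert {u, v} (zero I)"

lemma card_zero_el: "A \<in> zero I \<Longrightarrow> card A = 1"
  unfolding zero_def by auto

lemma zero_forest: "forest I (zero I)"
  unfolding forest_def
proof (intro conjI ballI impI)
  fix A assume "A \<in> zero I" then show "A \<noteq> {}" unfolding zero_def by auto
next
  fix A assume "A \<in> zero I" then show "A \<subseteq> I" unfolding zero_def by auto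
next
  fix x assume "x \<in> I" then show "{x} \<in> zero I" unfolding zero_def by auto
next
  fix A B assume "A \<in> zero I" "B \<in> zero I"
  then show "A \<subseteq> B \<or> B \<subseteq> A \<or> A \<inter> B = {}" unfolding zero_def by auto
next
  fix A assume "A \<in> zero I" "2 \<le> card A"
  then have False using card_zero_el[of A I] by simp
  then show "\<exists>B1\<in>zero I. \<exists>B2\<in>zero I. B1 \<noteq> {} \<and> B2 \<noteq> {} \<and> B1 \<inter> B2 = {} \<and> B1 \<union> B2 = A" ..
qed

lemma inner_zero: "inner (zero I) = {}"
proof -
  have "\<forall>A \<in> zero I. \<not> 2 \<le> card A"
  proof
    fix A assume "A \<in> zero I"
    then have "card A = 1" by (rule card_zero_el)
    then show "\<not> 2 \<le> card A" by simp
  qed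
  then show ?thesis unfolding inner_def by blast
qed

lemma zero_sub: "forest I F \<Longrightarrow> zero I \<subseteq> F"
proof
  fix A assume f: "forest I F" and "A \<in> zero I"
  then obtain x where "x \<in> I" "A = {x}" unfolding zero_def by blast
  then show "A \<in> F" using forest_single[OF f] by simp
qed

lemma leq_zero: "forest I F \<Longrightarrow> leq I (zero I) F"
  unfolding leq_def using zero_forest[of I] morph_id[OF zero_sub] by blast

lemma card_uv: "u \<noteq> v \<Longrightarrow> card {u, v} = 2" by simp

lemma sub_uv: "u \<noteq> v \<Longrightarrow> A \<subseteq> {u, v} \<Longrightarrow> 2 \<le> card A \<Longrightarrow> A = {u, v}"
proof -
  assume a: "u \<noteq> v" "A \<subseteq> {u, v}" "2 \<le> card A"
  have "card A \<le> card {u, v}" by (rule card_mono) (use a in auto)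
  then have "card A = card {u, v}" using a card_uv by simp
  then show ?thesis using card_subset_eq[of "{u,v}" A] a(2) by simp
qed

lemma cherry_forest:
  assumes "u \<in> I" "v \<in> I" "u \<noteq> v"
  shows "forest I (cherry I u v)"
  unfolding forest_def
proof (intro conjI ballI impI)
  fix A assume "A \<in> cherry I u v" then show "A \<noteq> {}" unfolding cherry_def zero_def by auto
next
  fix A assume "A \<in> cherry I u v" then show "A \<subseteq> I" unfolding cherry_def zero_def using assms by auto
next
  fix x assume "x \<in> I" then show "{x} \<in> cherry I u v" unfolding cherry_def zero_def by auto
next
  fix A B assume "A \<in> cherry I u v" "B \<in> cherry I u v"
  then show "A \<subseteq> B \<or> B \<subseteq> A \<or> A \<inter> B = {}" unfolding cherry_def zero_def by auto
next
  fix A assume a: "A \<in> cherry I u v" "2 \<le> card A"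
  have "A = {u, v}"
  proof (rule ccontr)
    assume "A \<noteq> {u, v}"
    then have "A \<in> zero I" using a(1) unfolding cherry_def by blast
    then have "card A = 1" by (rule card_zero_el)
    then show False using a(2) by simp
  qed
  moreover have "{u} \<in> cherry I u v" "{v} \<in> cherry I u v" unfolding cherry_def zero_def using assms by auto
  ultimately show "\<exists>B1\<in>cherry I u v. \<exists>B2\<in>cherry I u v. B1 \<noteq> {} \<and> B2 \<noteq> {} \<and> B1 \<inter> B2 = {} \<and> B1 \<union> B2 = A"
    using assms(3) by blast
qed

lemma inner_cherry: "u \<noteq> v \<Longrightarrow> inner (cherry I u v) = {{u, v}}"
proof -
  assume uv: "u \<noteq> v"
  have "\<forall>A \<in> zero I. \<not> 2 \<le> card A"
  proof
    fix A assume "A \<in> zero I"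
    then have "card A = 1" by (rule card_zero_el)
    then show "\<not> 2 \<le> card A" by simp
  qed
  moreover have "2 \<le> card {u, v}" using uv by simp
  ultimately show ?thesis unfolding inner_def cherry_def by blast
qed

lemma cherry_not_zero: "u \<noteq> v \<Longrightarrow> cherry I u v \<noteq> zero I"
proof
  assume uv: "u \<noteq> v" and e: "cherry I u v = zero I"
  have "inner (cherry I u v) = inner (zero I)" using e by simp
  then show False using inner_cherry[OF uv, of I] inner_zero[of I] by simp
qed

lemma least_cluster:
  assumes I: "finite I" and fG: "forest I G" and X: "X \<noteq> {}" "C1 \<in> G" "X \<subseteq> C1"
  shows "\<exists>C0\<in>G. X \<subseteq> C0 \<and> (\<forall>C\<in>G. X \<subseteq> C \<longrightarrow> C0 \<subseteq> C)"
proof -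
  let ?M = "{C \<in> G. X \<subseteq> C}"
  have fin: "finite ?M" using finite_forest[OF I fG] by simp
  have ne: "?M \<noteq> {}" using X by blast
  define k where "k = Min (card ` ?M)"
  have "k \<in> card ` ?M" unfolding k_def using fin ne by simp
  then obtain C0 where C0: "C0 \<in> ?M" "card C0 = k" by blast
  have minC: "\<And>C. C \<in> ?M \<Longrightarrow> card C0 \<le> card C" unfolding C0(2) k_def using fin by simp
  have "\<forall>C\<in>G. X \<subseteq> C \<longrightarrow> C0 \<subseteq> C"
  proof (intro ballI impI)
    fix C assume c: "C \<in> G" "X \<subseteq> C"
    have C0G: "C0 \<in> G" "X \<subseteq> C0" using C0(1) by auto
    have l: "C0 \<subseteq> C \<or> C \<subseteq> C0 \<or> C0 \<inter> C = {}" by (rule forest_lam[OF fG C0G(1) c(1)])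
    have "C \<subseteq> C0 \<Longrightarrow> C0 \<subseteq> C"
    proof -
      assume s: "C \<subseteq> C0"
      have "card C0 \<le> card C" using minC c by simp
      moreover have "finite C0" using forest_fin[OF I fG C0G(1)] .
      ultimately have "C = C0" using card_subset_eq[of C0 C] s card_mono[of C0 C] by (metis le_antisym)
      then show "C0 \<subseteq> C" by simp
    qed
    then show "C0 \<subseteq> C" using l c(2) C0G(2) X(1) by blast
  qed
  then show ?thesis using C0(1) by blast
qed

lemma uv_in_cherry: "{u, v} \<in> cherry I u v" unfolding cherry_def by simp

lemma cherry_cases: "A \<in> cherry I u v \<Longrightarrow> A = {u, v} \<or> (\<exists>x\<in>I. A = {x})"
  unfolding cherry_def zero_def by blast

lemma leq_cherry:
  assumes I: "finite I" and fG: "forest I G" and uv: "u \<in> I" "v \<in> I" "u \<noteq> v"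
  shows "leq I (cherry I u v) G \<longleftrightarrow> (\<exists>C\<in>G. {u, v} \<subseteq> C)"
proof
  assume "leq I (cherry I u v) G"
  then obtain \<phi> where m: "morph (cherry I u v) G \<phi>" unfolding leq_def by blast
  have f: "forest I (cherry I u v)" by (rule cherry_forest[OF uv])
  have "\<phi> {u, v} \<in> G" by (rule morph_in[OF m uv_in_cherry])
  moreover have "{u, v} \<subseteq> \<phi> {u, v}" by (rule morph_sup[OF f m uv_in_cherry])
  ultimately show "\<exists>C\<in>G. {u, v} \<subseteq> C" by blast
next
  assume "\<exists>C\<in>G. {u, v} \<subseteq> C"
  then obtain C1 where C1: "C1 \<in> G" "{u, v} \<subseteq> C1" by blast
  obtain C0 where C0: "C0 \<in> G" "{u, v} \<subseteq> C0" "\<forall>C\<in>G. {u, v} \<subseteq> C \<longrightarrow> C0 \<subseteq> C"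
    using least_cluster[OF I fG _ C1] by blast
  define \<phi> where "\<phi> = (\<lambda>A. if A = {u, v} then C0 else A)"
  have f: "forest I (cherry I u v)" by (rule cherry_forest[OF uv])
  have sing: "\<And>x. {x} \<noteq> {u, v}" using uv(3) by (metis doubleton_eq_iff insert_not_empty singleton_insert_inj_eq)
  have "morph (cherry I u v) G \<phi>"
    unfolding morph_def
  proof (intro conjI ballI impI allI)
    fix A assume "A \<in> cherry I u v"
    then show "\<phi> A \<in> G" using cherry_cases[of A I u v] C0(1) forest_single[OF fG] unfolding \<phi>_def by auto
  next
    fix A B assume a: "A \<in> cherry I u v" "B \<in> cherry I u v" "A \<subseteq> B"
    show "\<phi> A \<subseteq> \<phi> B"
    proof (cases "A = B")
      case False
      have cA: "A = {u, v} \<or> (\<exists>x\<in>I. A = {x})" by (rule cherry_cases[OF a(1)])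
      have cB: "B = {u, v} \<or> (\<exists>x\<in>I. B = {x})" by (rule cherry_cases[OF a(2)])
      have "A \<noteq> {u, v}" using False a(3) cB uv(3) by auto
      moreover have "B = {u, v}" using False a(3) cA cB by auto
      ultimately show ?thesis unfolding \<phi>_def using a(3) C0(2) by auto
    qed simp
  next
    fix A assume "A \<in> inner (cherry I u v)"
    then have "A = {u, v}" using inner_cherry[OF uv(3)] by blast
    moreover have "2 \<le> card C0"
    proof -
      have "card {u, v} \<le> card C0" by (rule card_mono[OF forest_fin[OF I fG C0(1)] C0(2)])
      then show ?thesis using uv(3) by simp
    qed
    ultimately show "\<phi> A \<in> inner G" unfolding \<phi>_def using C0(1) inner_iff by auto
  next
    show "inj_on \<phi> (inner (cherry I u v))" using inner_cherry[OF uv(3)] by simp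
  next
    fix A assume "A \<in> cherry I u v" "card A = 1"
    then have "A \<noteq> {u, v}" using uv(3) by auto
    then show "\<phi> A = A" unfolding \<phi>_def by simp
  next
    fix A B1 B2 C
    assume a: "A \<in> cherry I u v" "B1 \<in> cherry I u v" "B2 \<in> cherry I u v"
      and b: "B1 \<noteq> {} \<and> B2 \<noteq> {} \<and> B1 \<inter> B2 = {} \<and> B1 \<union> B2 = A"
      and c: "C \<in> G" "\<phi> B1 \<union> \<phi> B2 \<subseteq> C"
    have "2 \<le> card A" using split_card[OF I f a(2,3)] b by metis
    then have Auv: "A = {u, v}"
      using cherry_cases[OF a(1)] by auto
    have "B1 \<noteq> {u, v}" using b Auv by blast
    moreover have "B2 \<noteq> {u, v}" using b Auv by blast
    ultimately have "\<phi> B1 = B1" "\<phi> B2 = B2" unfolding \<phi>_def by auto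
    then have "{u, v} \<subseteq> C" using c(2) b Auv by simp
    then show "\<phi> A \<subseteq> C" unfolding \<phi>_def using Auv C0(3) c(1) by simp
  qed
  then show "leq I (cherry I u v) G" unfolding leq_def using f fG by blast
qed

lemma vin_zero: "finite I \<Longrightarrow> forest I T \<Longrightarrow> vin T (zero I) = {}"
proof -
  assume I: "finite I" and fT: "forest I T"
  have "vin T (zero I) = id ` inner (zero I)" by (rule vin_eq[OF I zero_forest morph_id[OF zero_sub[OF fT]]])
  then show ?thesis using inner_zero by simp
qed

lemma lam_cherry:
  assumes I: "finite I" and fT: "forest I T" and uv: "u \<in> I" "v \<in> I" "u \<noteq> v"
    and m: "morph (cherry I u v) T \<phi>"
  shows "lam T lbl (zero I) (cherry I u v) = lbl (\<phi> {u, v})"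
proof -
  have "vin T (cherry I u v) = {\<phi> {u, v}}"
    using vin_eq[OF I cherry_forest[OF uv] m] inner_cherry[OF uv(3)] by simp
  then have "vin T (cherry I u v) - vin T (zero I) = {\<phi> {u, v}}" using vin_zero[OF I fT] by simp
  then show ?thesis unfolding lam_def by simp
qed

lemma atom_iff:
  assumes I: "finite I"
  shows "atom I a \<longleftrightarrow> (\<exists>u v. u \<in> I \<and> v \<in> I \<and> u \<noteq> v \<and> a = cherry I u v)"
proof
  assume "atom I a"
  then have cov: "leq I (zero I) a" "zero I \<noteq> a"
    "\<not> (\<exists>H. leq I (zero I) H \<and> leq I H a \<and> H \<noteq> zero I \<and> H \<noteq> a)"
    unfolding atom_def covers_def by blast+
  have fa: "forest I a" using cov(1) unfolding leq_def by blast
  have ne: "inner a \<noteq> {}"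
  proof
    assume "inner a = {}"
    then have "a = zero I" using forest_decomp[OF I fa] by simp
    then show False using cov(2) by simp
  qed
  have fin: "finite (inner a)" by (rule finite_inner[OF I fa])
  define k where "k = Min (card ` inner a)"
  have "k \<in> card ` inner a" unfolding k_def using fin ne by simp
  then obtain A where A: "A \<in> inner a" "card A = k" by blast
  have minA: "\<And>A'. A' \<in> inner a \<Longrightarrow> card A \<le> card A'" unfolding A(2) k_def using fin by simp
  have Aa: "A \<in> a" "2 \<le> card A" using A(1) inner_iff by auto
  obtain B1 B2 where b: "B1\<in>a" "B2\<in>a" "B1 \<noteq> {}" "B2 \<noteq> {}" "B1 \<inter> B2 = {}" "B1 \<union> B2 = A"
    using forest_split[OF fa Aa] by blast
  have lt: "card B1 < card A" "card B2 < card A" using split_card[OF I fa b(1-5)] b(6) by auto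
  have "\<not> 2 \<le> card B1"
  proof
    assume "2 \<le> card B1"
    then have "B1 \<in> inner a" using b(1) inner_iff by blast
    then show False using minA lt(1) by fastforce
  qed
  then obtain u where u: "u \<in> I" "B1 = {u}" using forest_card1[OF I fa b(1)] by blast
  have "\<not> 2 \<le> card B2"
  proof
    assume "2 \<le> card B2"
    then have "B2 \<in> inner a" using b(1,2) inner_iff by blast
    then show False using minA lt(2) by fastforce
  qed
  then obtain v where v: "v \<in> I" "B2 = {v}" using forest_card1[OF I fa b(2)] by blast
  have uv: "u \<noteq> v" using b(5) u(2) v(2) by blast
  have Auv: "A = {u, v}" using b(6) u(2) v(2) by blast
  have fH: "forest I (cherry I u v)" by (rule cherry_forest[OF u(1) v(1) uv])
  have "cherry I u v \<subseteq> a" unfolding cherry_def using zero_sub[OF fa] Aa(1) Auv by blast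
  then have l2: "leq I (cherry I u v) a" unfolding leq_def using fH fa morph_id by blast
  have l1: "leq I (zero I) (cherry I u v)" by (rule leq_zero[OF fH])
  have "cherry I u v = a" using cov(3) l1 l2 cherry_not_zero[OF uv] by blast
  then show "\<exists>u v. u \<in> I \<and> v \<in> I \<and> u \<noteq> v \<and> a = cherry I u v" using u(1) v(1) uv by blast
next
  assume "\<exists>u v. u \<in> I \<and> v \<in> I \<and> u \<noteq> v \<and> a = cherry I u v"
  then obtain u v where uv: "u \<in> I" "v \<in> I" "u \<noteq> v" and a: "a = cherry I u v" by blast
  have fa: "forest I a" unfolding a by (rule cherry_forest[OF uv])
  have "\<not> (\<exists>H. leq I (zero I) H \<and> leq I H a \<and> H \<noteq> zero I \<and> H \<noteq> a)"
  proof
    assume "\<exists>H. leq I (zero I) H \<and> leq I H a \<and> H \<noteq> zero I \<and> H \<noteq> a"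
    then obtain H where H: "leq I H a" "H \<noteq> zero I" "H \<noteq> a" by blast
    obtain \<phi> where fH: "forest I H" and m: "morph H a \<phi>" using H(1) unfolding leq_def by blast
    have sub: "inner H \<subseteq> {{u, v}}"
    proof
      fix A assume A: "A \<in> inner H"
      have "\<phi> A \<in> inner a" by (rule morph_inner[OF m A])
      then have "\<phi> A = {u, v}" using inner_cherry[OF uv(3)] a by simp
      moreover have "A \<subseteq> \<phi> A" using morph_sup[OF fH m] A inner_iff by blast
      moreover have "2 \<le> card A" using A inner_iff by blast
      ultimately have "A = {u, v}" using sub_uv[OF uv(3)] by simp
      then show "A \<in> {{u, v}}" by simp
    qed
    have "inner H \<noteq> {}"
    proof
      assume "inner H = {}"
      then have "H = zero I" using forest_decomp[OF I fH] by simp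
      then show False using H(2) by simp
    qed
    then have "inner H = {{u, v}}" using sub by blast
    then have "H = zero I \<union> {{u, v}}" using forest_decomp[OF I fH] by simp
    then have "H = a" unfolding a cherry_def by simp
    then show False using H(3) by simp
  qed
  moreover have "leq I (zero I) a" by (rule leq_zero[OF fa])
  moreover have "zero I \<noteq> a" using cherry_not_zero[OF uv(3), of I] a by metis
  ultimately show "atom I a" unfolding atom_def covers_def by blast
qed

lemma incr_seq:
  fixes g :: "nat \<Rightarrow> nat"
  assumes inc: "\<forall>i\<in>{1..n}. g (i - 1) < g i" and i: "i \<le> n"
  shows "g 0 + i \<le> g i \<and> g i + (n - i) \<le> g n"
proof
  have "\<And>j. j \<le> n \<Longrightarrow> g 0 + j \<le> g j"
  proof -
    fix j show "j \<le> n \<Longrightarrow> g 0 + j \<le> g j"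
    proof (induction j)
      case (Suc j)
      have "Suc j \<in> {1..n}" using Suc.prems by simp
      then have "g (Suc j - 1) < g (Suc j)" using inc by blast
      then show ?case using Suc by simp
    qed simp
  qed
  then show "g 0 + i \<le> g i" using i .
next
  have "\<And>k j. j + k = n \<Longrightarrow> g j + k \<le> g n"
  proof -
    fix k show "\<And>j. j + k = n \<Longrightarrow> g j + k \<le> g n"
    proof (induction k)
      case (Suc k)
      then have "Suc j + k = n" by simp
      then have h: "g (Suc j) + k \<le> g n" using Suc.IH by blast
      have "Suc j \<in> {1..n}" using Suc.prems by simp
      then have "g (Suc j - 1) < g (Suc j)" using inc by blast
      then show ?case using h by simp
    qed simp
  qed
  moreover have "i + (n - i) = n" using i by simp
  ultimately show "g i + (n - i) \<le> g n" by blast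
qed

lemma chain_struct:
  fixes I :: "'a set" and T :: "'a set set" and lbl :: "'a set \<Rightarrow> nat"
    and x :: "nat \<Rightarrow> 'a set set" and n :: nat
  assumes I: "finite I"
    and fT: "forest I T"
    and nT: "n = card (inner T)"
    and nice: "nice_order T lbl"
    and x0: "x 0 = zero I"
    and xn: "x n = T"
    and cov: "\<forall>i\<in>{1..n}. covers I (x (i - 1)) (x i)"
    and inc: "\<forall>i j. 1 \<le> i \<and> i < j \<and> j \<le> n \<longrightarrow>
           lam T lbl (x (i - 1)) (x i) < lam T lbl (x (j - 1)) (x j)"
  shows "\<forall>i\<le>n. forest I (x i) \<and> (\<exists>\<phi>. morph (x i) T \<phi> \<and> \<phi> ` inner (x i) = {w\<in>inner T. lbl w \<le> i})
           \<and> {w\<in>inner T. lbl w \<le> i} \<subseteq> x i"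
proof -
  have lx: "\<And>i. i \<in> {1..n} \<Longrightarrow> leq I (x (i - 1)) (x i) \<and> x (i - 1) \<noteq> x i"
    using cov unfolding covers_def by blast
  have fx: "\<And>i. i \<le> n \<Longrightarrow> forest I (x i)"
  proof -
    fix i assume i: "i \<le> n"
    show "forest I (x i)"
    proof (cases "i = 0")
      case True then show ?thesis using x0 zero_forest by simp
    next
      case False then have "i \<in> {1..n}" using i by simp
      then show ?thesis using lx unfolding leq_def by blast
    qed
  qed
  have lTT: "leq I T T" unfolding leq_def using fT morph_id[of T T] by blast
  have lT0: "\<And>k. k \<le> n \<Longrightarrow> leq I (x (n - k)) T"
  proof -
    fix k show "k \<le> n \<Longrightarrow> leq I (x (n - k)) T"
    proof (induction k)
      case 0 then show ?case using xn lTT by simp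
    next
      case (Suc k)
      then have h: "leq I (x (n - k)) T" by simp
      have "n - k \<in> {1..n}" using Suc.prems by simp
      then have "leq I (x (n - k - 1)) (x (n - k))" using lx by blast
      moreover have "n - k - 1 = n - Suc k" by simp
      ultimately have "leq I (x (n - Suc k)) (x (n - k))" by simp
      then show ?case using leq_trans[OF I _ h] by blast
    qed
  qed
  have lT: "\<And>i. i \<le> n \<Longrightarrow> leq I (x i) T"
  proof -
    fix i assume "i \<le> n"
    then have "n - (n - i) = i" "n - i \<le> n" by auto
    then show "leq I (x i) T" using lT0 by metis
  qed
  define \<Phi> where "\<Phi> = (\<lambda>i. SOME \<phi>. morph (x i) T \<phi>)"
  have m: "\<And>i. i \<le> n \<Longrightarrow> morph (x i) T (\<Phi> i)"
  proof -
    fix i assume "i \<le> n"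
    then have "\<exists>\<phi>. morph (x i) T \<phi>" using lT unfolding leq_def by blast
    then show "morph (x i) T (\<Phi> i)" unfolding \<Phi>_def by (rule someI_ex)
  qed
  define V where "V = (\<lambda>i. \<Phi> i ` inner (x i))"
  have vinV: "\<And>i. i \<le> n \<Longrightarrow> vin T (x i) = V i"
    unfolding V_def using vin_eq[OF I fx m] by blast
  have VT: "\<And>i. i \<le> n \<Longrightarrow> V i \<subseteq> inner T"
    unfolding V_def using morph_inner[OF m] by blast
  have finT: "finite (inner T)" by (rule finite_inner[OF I fT])
  have finV: "\<And>i. i \<le> n \<Longrightarrow> finite (V i)" using VT finT finite_subset by blast
  have cardV: "\<And>i. i \<le> n \<Longrightarrow> card (V i) = card (inner (x i))"
    unfolding V_def using card_image[OF morph_inj[OF m]] by blast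
  have Vmono: "\<And>i. i \<in> {1..n} \<Longrightarrow> V (i - 1) \<subseteq> V i"
  proof
    fix i w assume i: "i \<in> {1..n}" and w: "w \<in> V (i - 1)"
    obtain \<psi> where m\<psi>: "morph (x (i - 1)) (x i) \<psi>" using lx[OF i] unfolding leq_def by blast
    have i1: "i - 1 \<le> n" "i \<le> n" using i by auto
    have mc: "morph (x (i - 1)) T (\<Phi> i \<circ> \<psi>)" by (rule morph_comp[OF I fx[OF i1(1)] fx[OF i1(2)] fT m\<psi> m[OF i1(2)]])
    obtain A where A: "A \<in> inner (x (i - 1))" "w = \<Phi> (i - 1) A" using w unfolding V_def by blast
    have AF: "A \<in> x (i - 1)" using A(1) inner_iff by blast
    have "\<Phi> (i - 1) A = (\<Phi> i \<circ> \<psi>) A" by (rule morph_uniq[OF I fx[OF i1(1)] m[OF i1(1)] mc AF])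
    moreover have "\<psi> A \<in> inner (x i)" by (rule morph_inner[OF m\<psi> A(1)])
    ultimately show "w \<in> V i" unfolding V_def using A(2) by simp
  qed
  have cstrict: "\<And>i. i \<in> {1..n} \<Longrightarrow> card (V (i - 1)) < card (V i)"
  proof -
    fix i assume i: "i \<in> {1..n}"
    have "card (inner (x (i - 1))) < card (inner (x i))" using leq_strict[OF I] lx[OF i] by blast
    moreover have "i - 1 \<le> n" "i \<le> n" using i by auto
    ultimately show "card (V (i - 1)) < card (V i)" using cardV by metis
  qed
  have cV0: "card (V 0) = 0" using cardV[of 0] x0 by (simp add: inner_zero)
  have mT: "morph T T id" by (rule morph_id) simp
  have Vn: "V n = inner T"
  proof -
    have "\<forall>A\<in>inner T. \<Phi> n A = id A" using morph_uniq[OF I fT _ mT] m[of n] xn inner_iff by auto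
    then show ?thesis unfolding V_def using xn by simp
  qed
  have cVn: "card (V n) = n" using Vn nT by simp
  have cVi: "\<And>i. i \<le> n \<Longrightarrow> card (V i) = i"
  proof -
    fix i assume i: "i \<le> n"
    have "\<forall>i\<in>{1..n}. card (V (i - 1)) < card (V i)" using cstrict by blast
    from incr_seq[OF this i] have "card (V 0) + i \<le> card (V i) \<and> card (V i) + (n - i) \<le> card (V n)" .
    then show "card (V i) = i" using cV0 cVn i by linarith
  qed
  have single: "\<And>i. i \<in> {1..n} \<Longrightarrow> \<exists>w. V i - V (i - 1) = {w}"
  proof -
    fix i assume i: "i \<in> {1..n}"
    have i1: "i - 1 \<le> n" "i \<le> n" using i by auto
    have "card (V i - V (i - 1)) = card (V i) - card (V (i - 1))"
      by (rule card_Diff_subset[OF finV[OF i1(1)] Vmono[OF i]])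
    also have "\<dots> = 1" using cVi[OF i1(1)] cVi[OF i1(2)] i by simp
    finally show "\<exists>w. V i - V (i - 1) = {w}" using card_1_singletonE by metis
  qed
  define nv where "nv = (\<lambda>i. THE w. V i - V (i - 1) = {w})"
  have nv: "\<And>i. i \<in> {1..n} \<Longrightarrow> V i - V (i - 1) = {nv i}"
  proof -
    fix i assume i: "i \<in> {1..n}"
    obtain w where w: "V i - V (i - 1) = {w}" using single[OF i] by blast
    have "nv i = w" unfolding nv_def using w by simp
    then show "V i - V (i - 1) = {nv i}" using w by simp
  qed
  have nvT: "\<And>i. i \<in> {1..n} \<Longrightarrow> nv i \<in> inner T"
  proof -
    fix i assume i: "i \<in> {1..n}"
    then have "nv i \<in> V i" using nv by blast
    then show "nv i \<in> inner T" using VT i by auto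
  qed
  have lamnv: "\<And>i. i \<in> {1..n} \<Longrightarrow> lam T lbl (x (i - 1)) (x i) = lbl (nv i)"
  proof -
    fix i assume i: "i \<in> {1..n}"
    have i1: "i - 1 \<le> n" "i \<le> n" using i by auto
    show "lam T lbl (x (i - 1)) (x i) = lbl (nv i)"
      unfolding lam_def vinV[OF i1(1)] vinV[OF i1(2)] nv[OF i] by simp
  qed
  have bij: "bij_betw lbl (inner T) {1..n}" using nice nT unfolding nice_order_def by simp
  have lmono: "\<And>v w. v \<in> inner T \<Longrightarrow> w \<in> inner T \<Longrightarrow> v \<subseteq> w \<Longrightarrow> lbl v \<le> lbl w"
    using nice unfolding nice_order_def by blast
  have lrange: "\<And>w. w \<in> inner T \<Longrightarrow> lbl w \<in> {1..n}" using bij bij_betwE by blast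
  have linj: "inj_on lbl (inner T)" using bij bij_betw_def by blast
  define h where "h = (\<lambda>i. if i = 0 then 0 else lbl (nv i))"
  have hinc: "\<forall>i\<in>{1..n}. h (i - 1) < h i"
  proof
    fix i assume i: "i \<in> {1..n}"
    show "h (i - 1) < h i"
    proof (cases "i = 1")
      case True
      then show ?thesis unfolding h_def using lrange[OF nvT[OF i]] by simp
    next
      case False
      then have "1 \<le> i - 1" "i - 1 < i" "i \<le> n" using i by auto
      then have "lam T lbl (x (i - 1 - 1)) (x (i - 1)) < lam T lbl (x (i - 1)) (x i)" using inc by blast
      moreover have i1: "i - 1 \<in> {1..n}" using False i by auto
      moreover have "lam T lbl (x (i - 1 - 1)) (x (i - 1)) = lbl (nv (i - 1))" by (rule lamnv[OF i1])
      moreover have "lam T lbl (x (i - 1)) (x i) = lbl (nv i)" by (rule lamnv[OF i])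
      ultimately have "lbl (nv (i - 1)) < lbl (nv i)" by simp
      then show ?thesis unfolding h_def using False i by simp
    qed
  qed
  have lblnv: "\<And>i. i \<in> {1..n} \<Longrightarrow> lbl (nv i) = i"
  proof -
    fix i assume i: "i \<in> {1..n}"
    have hn: "h n \<le> n"
    proof (cases "n = 0")
      case False
      then have "n \<in> {1..n}" by simp
      then show ?thesis unfolding h_def using lrange[OF nvT] False by auto
    qed (simp add: h_def)
    have "h 0 + i \<le> h i \<and> h i + (n - i) \<le> h n" using incr_seq[OF hinc] i by simp
    moreover have "h 0 = 0" by (simp add: h_def)
    ultimately have "h i = i" using hn i by linarith
    then show "lbl (nv i) = i" using i unfolding h_def by simp
  qed
  have Vle: "\<And>i. i \<le> n \<Longrightarrow> \<forall>w\<in>V i. lbl w \<le> i"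
  proof -
    fix i show "i \<le> n \<Longrightarrow> \<forall>w\<in>V i. lbl w \<le> i"
    proof (induction i)
      case 0
      have "V 0 = {}" using cV0 finV[of 0] by simp
      then show ?case by simp
    next
      case (Suc i)
      then have si: "Suc i \<in> {1..n}" by simp
      have IH: "\<forall>w\<in>V i. lbl w \<le> i" using Suc by simp
      have "V (Suc i) - V i = {nv (Suc i)}" using nv[OF si] by simp
      then have "V (Suc i) \<subseteq> V i \<union> {nv (Suc i)}" by blast
      then show ?case
      proof (intro ballI)
        fix w assume sub: "V (Suc i) \<subseteq> V i \<union> {nv (Suc i)}" and w: "w \<in> V (Suc i)"
        then have "w \<in> V i \<or> w = nv (Suc i)" by blast
        then show "lbl w \<le> Suc i"
        proof
          assume "w \<in> V i" then show ?thesis using IH by fastforce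
        next
          assume "w = nv (Suc i)" then show ?thesis using lblnv[OF si] by simp
        qed
      qed
    qed
  qed
  have Veq: "\<And>i. i \<le> n \<Longrightarrow> V i = {w\<in>inner T. lbl w \<le> i}"
  proof -
    fix i assume i: "i \<le> n"
    let ?R = "{w\<in>inner T. lbl w \<le> i}"
    have sub: "V i \<subseteq> ?R" using VT[OF i] Vle[OF i] by blast
    have finR: "finite ?R" using finT by simp
    have "card ?R \<le> card {1..i}"
    proof (rule card_inj_on_le)
      show "inj_on lbl ?R" by (rule inj_on_subset[OF linj]) blast
      show "lbl ` ?R \<subseteq> {1..i}"
      proof
        fix y assume "y \<in> lbl ` ?R"
        then obtain w where w: "w \<in> inner T" "lbl w \<le> i" "y = lbl w" by blast
        have "lbl w \<in> {1..n}" by (rule lrange[OF w(1)])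
        then show "y \<in> {1..i}" using w by simp
      qed
    qed simp
    then have "card ?R \<le> card (V i)" using cVi[OF i] by simp
    then show "V i = ?R" using card_seteq[OF finR sub] by simp
  qed
  have Vx: "\<And>i. i \<le> n \<Longrightarrow> V i \<subseteq> x i"
  proof
    fix i w assume i: "i \<le> n" and w: "w \<in> V i"
    have wT: "w \<in> inner T" using VT[OF i] w by blast
    have lw: "lbl w \<le> i" using Vle[OF i] w by blast
    show "w \<in> x i"
    proof (rule morph_fill[OF I fx[OF i] fT m[OF i] wT])
      show "\<forall>D'\<in>inner T. D' \<subseteq> w \<longrightarrow> D' \<in> \<Phi> i ` inner (x i)"
      proof (intro ballI impI)
        fix D' assume d: "D' \<in> inner T" "D' \<subseteq> w"
        have "lbl D' \<le> lbl w" by (rule lmono[OF d(1) wT d(2)])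
        then have "D' \<in> inner T" "lbl D' \<le> i" using d(1) lw by auto
        then have "D' \<in> V i" using Veq[OF i] by blast
        then show "D' \<in> \<Phi> i ` inner (x i)" unfolding V_def .
      qed
    qed
  qed
  show ?thesis
  proof (intro allI impI conjI)
    fix i assume i: "i \<le> n"
    show "forest I (x i)" using fx[OF i] .
    show "\<exists>\<phi>. morph (x i) T \<phi> \<and> \<phi> ` inner (x i) = {w \<in> inner T. lbl w \<le> i}"
      using m[OF i] Veq[OF i] unfolding V_def by blast
    show "{w \<in> inner T. lbl w \<le> i} \<subseteq> x i" using Vx[OF i] Veq[OF i] by simp
  qed
qed

lemma key:
  assumes I: "finite I" and fT: "forest I T" and nice: "nice_order T lbl" and fG: "forest I G"
    and mG: "morph G T \<psi>" and img: "\<psi> ` inner G = {w'\<in>inner T. lbl w' \<le> j}"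
    and sub: "{w'\<in>inner T. lbl w' \<le> j} \<subseteq> G"
    and uv: "u \<in> I" "v \<in> I" "u \<noteq> v"
    and w: "w \<in> inner T" "{u, v} \<subseteq> w" "\<forall>C\<in>T. {u, v} \<subseteq> C \<longrightarrow> w \<subseteq> C"
  shows "leq I (cherry I u v) G \<longleftrightarrow> lbl w \<le> j"
proof -
  have lmono: "\<And>v w. v \<in> inner T \<Longrightarrow> w \<in> inner T \<Longrightarrow> v \<subseteq> w \<Longrightarrow> lbl v \<le> lbl w"
    using nice unfolding nice_order_def by blast
  have "(\<exists>C\<in>G. {u, v} \<subseteq> C) \<longleftrightarrow> lbl w \<le> j"
  proof
    assume "\<exists>C\<in>G. {u, v} \<subseteq> C"
    then obtain C where C: "C \<in> G" "{u, v} \<subseteq> C" by blast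
    have "card {u, v} \<le> card C" by (rule card_mono[OF forest_fin[OF I fG C(1)] C(2)])
    then have "2 \<le> card C" using uv(3) by simp
    then have Ci: "C \<in> inner G" using C(1) inner_iff by blast
    then have "\<psi> C \<in> {w'\<in>inner T. lbl w' \<le> j}" using img by blast
    then have pC: "\<psi> C \<in> inner T" "lbl (\<psi> C) \<le> j" by auto
    have "C \<subseteq> \<psi> C" by (rule morph_sup[OF fG mG C(1)])
    moreover have "\<psi> C \<in> T" by (rule morph_in[OF mG C(1)])
    ultimately have "w \<subseteq> \<psi> C" using w(3) C(2) by blast
    then have "lbl w \<le> lbl (\<psi> C)" by (rule lmono[OF w(1) pC(1)])
    then show "lbl w \<le> j" using pC(2) by simp
  next
    assume "lbl w \<le> j"
    then have "w \<in> G" using sub w(1) by blast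
    then show "\<exists>C\<in>G. {u, v} \<subseteq> C" using w(2) by blast
  qed
  then show ?thesis using leq_cherry[OF I fG uv] by simp
qed

theorem lemma5p5:
  fixes I :: "'a set" and T :: "'a set set" and lbl :: "'a set \<Rightarrow> nat"
    and x :: "nat \<Rightarrow> 'a set set" and n :: nat
  assumes "finite I"
    and "is_tree I T"
    and "n = card (inner T)"
    and "nice_order T lbl"
    and "x 0 = zero I"
    and "x n = T"
    and "\<forall>i\<in>{1..n}. covers I (x (i - 1)) (x i)"
    and "\<forall>i j. 1 \<le> i \<and> i < j \<and> j \<le> n \<longrightarrow>
           lam T lbl (x (i - 1)) (x i) < lam T lbl (x (j - 1)) (x j)"
  shows "\<forall>i\<in>{1..n}.
           {a. atom I a \<and> leq I a (x i) \<and> \<not> leq I a (x (i - 1))} =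
           {a. atom I a \<and> leq I a T \<and> lam T lbl (zero I) a = i}"
proof
  fix i assume i: "i \<in> {1..n}"
  have I: "finite I" using assms(1) .
  have fT: "forest I T" and IT: "I \<in> T" using assms(2) unfolding is_tree_def by auto
  have cs: "\<forall>i\<le>n. forest I (x i) \<and> (\<exists>\<phi>. morph (x i) T \<phi> \<and> \<phi> ` inner (x i) = {w\<in>inner T. lbl w \<le> i})
           \<and> {w\<in>inner T. lbl w \<le> i} \<subseteq> x i"
    by (rule chain_struct[OF I fT assms(3-8)])
  show "{a. atom I a \<and> leq I a (x i) \<and> \<not> leq I a (x (i - 1))} =
           {a. atom I a \<and> leq I a T \<and> lam T lbl (zero I) a = i}"
  proof (rule Collect_cong)
    fix a
    show "(atom I a \<and> leq I a (x i) \<and> \<not> leq I a (x (i - 1))) \<longleftrightarrow>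
          (atom I a \<and> leq I a T \<and> lam T lbl (zero I) a = i)"
    proof (cases "atom I a")
      case False then show ?thesis by simp
    next
      case True
      then obtain u v where uv: "u \<in> I" "v \<in> I" "u \<noteq> v" and a: "a = cherry I u v"
        using atom_iff[OF I] by blast
      have uvI: "{u, v} \<noteq> {}" "{u, v} \<subseteq> I" using uv by auto
      obtain w where w0: "w \<in> T" "{u, v} \<subseteq> w" "\<forall>C\<in>T. {u, v} \<subseteq> C \<longrightarrow> w \<subseteq> C"
        using least_cluster[OF I fT uvI(1) IT uvI(2)] by blast
      have "card {u, v} \<le> card w" by (rule card_mono[OF forest_fin[OF I fT w0(1)] w0(2)])
      then have "2 \<le> card w" using uv(3) by simp
      then have wT: "w \<in> inner T" using w0(1) inner_iff by blast
      have lT: "leq I (cherry I u v) T" using leq_cherry[OF I fT uv] IT uvI(2) by blast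
      then obtain \<phi> where m: "morph (cherry I u v) T \<phi>" unfolding leq_def by blast
      have fc: "forest I (cherry I u v)" by (rule cherry_forest[OF uv])
      have "\<phi> {u, v} \<subseteq> w" by (rule morph_least[OF I fc m uv_in_cherry w0(1) w0(2)])
      moreover have "w \<subseteq> \<phi> {u, v}"
        using w0(3) morph_in[OF m uv_in_cherry] morph_sup[OF fc m uv_in_cherry] by blast
      ultimately have pw: "\<phi> {u, v} = w" by blast
      have lam: "lam T lbl (zero I) a = lbl w" using lam_cherry[OF I fT uv m] pw a by simp
      have kj: "\<And>j. j \<le> n \<Longrightarrow> leq I a (x j) \<longleftrightarrow> lbl w \<le> j"
      proof -
        fix j assume j: "j \<le> n"
        have c: "forest I (x j)" "\<exists>\<phi>. morph (x j) T \<phi> \<and> \<phi> ` inner (x j) = {w\<in>inner T. lbl w \<le> j}"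
          "{w\<in>inner T. lbl w \<le> j} \<subseteq> x j" using cs j by auto
        obtain \<psi> where \<psi>: "morph (x j) T \<psi>" "\<psi> ` inner (x j) = {w\<in>inner T. lbl w \<le> j}" using c(2) by blast
        show "leq I a (x j) \<longleftrightarrow> lbl w \<le> j" unfolding a
          by (rule key[OF I fT assms(4) c(1) \<psi> c(3) uv wT w0(2,3)])
      qed
      have i1: "i \<le> n" "i - 1 \<le> n" "1 \<le> i" using i by auto
      have "(leq I a (x i) \<and> \<not> leq I a (x (i - 1))) \<longleftrightarrow> lbl w = i"
        using kj[OF i1(1)] kj[OF i1(2)] i1(3) by auto
      then show ?thesis using True lT a lam by simp
    qed
  qed
qed

end
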